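(* $\mathsf{N}=\mathsf{MS4}+\Box\exists p\to\neg\Box\forall\neg\Box p=\mathsf{MS4}+\Box\forall\Diamond p\to\Diamond\forall p$, where $\mathsf{N}=\mathsf{MS4}+\Box\exists p\to\Diamond\exists\Box p$.
   Context: $\mathsf{MS4}$ is the smallest set of formulas in the classical bimodal language $\mathcal{L}_{\Box\forall}$ containing all classical tautologies, the $\mathsf{S4}$ axioms for $\Box$, the $\mathsf{S5}$ axioms for $\forall$, and $\Box\forall p\to\forall\Box p$, closed under modus ponens, substitution, $\Box$-necessitation and $\forall$-necessitation; $\Diamond=\neg\Box\neg$, $\exists=\neg\forall\neg$. For a formula $\chi$, $\mathsf{MS4}+\chi$ is the smallest set containing $\mathsf{MS4}$ and $\chi$ closed under these rules. *)

theory Defs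
  imports Main
begin

datatype fm = Var nat | Bot | Imp fm fm | Box fm | All fm

definition Neg :: "fm \<Rightarrow> fm" where "Neg a = Imp a Bot"
definition Dia :: "fm \<Rightarrow> fm" where "Dia a = Neg (Box (Neg a))"
definition Ex :: "fm \<Rightarrow> fm" where "Ex a = Neg (All (Neg a))"

fun peval :: "(fm \<Rightarrow> bool) \<Rightarrow> fm \<Rightarrow> bool" where
  "peval v (Var n) = v (Var n)"
| "peval v Bot = False"
| "peval v (Imp a b) = (peval v a \<longrightarrow> peval v b)"
| "peval v (Box a) = v (Box a)"
| "peval v (All a) = v (All a)"

definition taut :: "fm \<Rightarrow> bool" where "taut a = (\<forall>v. peval v a)"

fun subst :: "(nat \<Rightarrow> fm) \<Rightarrow> fm \<Rightarrow> fm" where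
  "subst s (Var n) = s n"
| "subst s Bot = Bot"
| "subst s (Imp a b) = Imp (subst s a) (subst s b)"
| "subst s (Box a) = Box (subst s a)"
| "subst s (All a) = All (subst s a)"

abbreviation p :: fm where "p \<equiv> Var 0"
abbreviation q :: fm where "q \<equiv> Var 1"

definition MS4_axioms :: "fm set" where
  "MS4_axioms = {
     Imp (Box (Imp p q)) (Imp (Box p) (Box q)),
     Imp (Box p) p,
     Imp (Box p) (Box (Box p)),
     Imp (All (Imp p q)) (Imp (All p) (All q)),
     Imp (All p) p,
     Imp (Ex p) (All (Ex p)),
     Imp (Box (All p)) (All (Box p))}"

inductive_set MS4_plus :: "fm set \<Rightarrow> fm set" for G :: "fm set" where
  taut: "taut a \<Longrightarrow> a \<in> MS4_plus G"
| ax: "a \<in> MS4_axioms \<Longrightarrow> a \<in> MS4_plus G"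
| extra: "a \<in> G \<Longrightarrow> a \<in> MS4_plus G"
| mp: "Imp a b \<in> MS4_plus G \<Longrightarrow> a \<in> MS4_plus G \<Longrightarrow> b \<in> MS4_plus G"
| sub: "a \<in> MS4_plus G \<Longrightarrow> subst s a \<in> MS4_plus G"
| nec_box: "a \<in> MS4_plus G \<Longrightarrow> Box a \<in> MS4_plus G"
| nec_all: "a \<in> MS4_plus G \<Longrightarrow> All a \<in> MS4_plus G"

abbreviation MS4 :: "fm set" where "MS4 \<equiv> MS4_plus {}"

definition N :: "fm set" where
  "N = MS4_plus {Imp (Box (Ex p)) (Dia (Ex (Box p)))}"

end

theory Submission
  imports Defs
begin

lemma mono_plus:
  assumes "G \<subseteq> MS4_plus H" shows "MS4_plus G \<subseteq> MS4_plus H"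
proof
  fix a assume "a \<in> MS4_plus G"
  then show "a \<in> MS4_plus H"
    by induction (use assms in \<open>auto intro: MS4_plus.intros\<close>)
qed

lemma taut_mp1: "taut (Imp a b) \<Longrightarrow> a \<in> MS4_plus G \<Longrightarrow> b \<in> MS4_plus G"
  by (meson MS4_plus.mp MS4_plus.taut)

lemma taut_mp2: "taut (Imp a (Imp b c)) \<Longrightarrow> a \<in> MS4_plus G \<Longrightarrow> b \<in> MS4_plus G \<Longrightarrow> c \<in> MS4_plus G"
  by (meson MS4_plus.mp MS4_plus.taut)

lemma box_mono:
  assumes "Imp a b \<in> MS4_plus G" shows "Imp (Box a) (Box b) \<in> MS4_plus G"
proof -
  have "Imp (Box (Imp p q)) (Imp (Box p) (Box q)) \<in> MS4_plus G"
    by (rule MS4_plus.ax) (simp add: MS4_axioms_def)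
  from MS4_plus.sub[OF this, of "\<lambda>n. if n = 0 then a else b"]
  have "Imp (Box (Imp a b)) (Imp (Box a) (Box b)) \<in> MS4_plus G" by simp
  then show ?thesis using MS4_plus.nec_box[OF assms] MS4_plus.mp by blast
qed

lemma all_mono:
  assumes "Imp a b \<in> MS4_plus G" shows "Imp (All a) (All b) \<in> MS4_plus G"
proof -
  have "Imp (All (Imp p q)) (Imp (All p) (All q)) \<in> MS4_plus G"
    by (rule MS4_plus.ax) (simp add: MS4_axioms_def)
  from MS4_plus.sub[OF this, of "\<lambda>n. if n = 0 then a else b"]
  have "Imp (All (Imp a b)) (Imp (All a) (All b)) \<in> MS4_plus G" by simp
  then show ?thesis using MS4_plus.nec_all[OF assms] MS4_plus.mp by blast
qed

lemma tautI: "taut (Imp (Neg (Neg a)) a)" "taut (Imp a (Neg (Neg a)))"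
  by (auto simp: taut_def Neg_def)

definition "A1 = Imp (Box (Ex p)) (Dia (Ex (Box p)))"
definition "A2 = Imp (Box (Ex p)) (Neg (Box (All (Neg (Box p)))))"
definition "A3 = Imp (Box (All (Dia p))) (Dia (All p))"

lemma in_extra_sub: "subst s a \<in> MS4_plus {a}"
  by (rule MS4_plus.sub) (rule MS4_plus.extra, simp)

lemma A1_A2: "A1 \<in> MS4_plus {A2}"
proof -
  let ?X = "All (Neg (Box p))"
  have "Imp (Box (Neg (Neg ?X))) (Box ?X) \<in> MS4_plus {A2}"
    by (rule box_mono) (rule MS4_plus.taut, rule tautI)
  moreover have "A2 \<in> MS4_plus {A2}" by (rule MS4_plus.extra) simp
  moreover have "taut (Imp (Imp (Box (Neg (Neg ?X))) (Box ?X)) (Imp A2 A1))"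
    by (auto simp: taut_def A1_def A2_def Neg_def Dia_def Ex_def)
  ultimately show ?thesis using taut_mp2 by blast
qed

lemma A2_A1: "A2 \<in> MS4_plus {A1}"
proof -
  let ?X = "All (Neg (Box p))"
  have "Imp (Box ?X) (Box (Neg (Neg ?X))) \<in> MS4_plus {A1}"
    by (rule box_mono) (rule MS4_plus.taut, rule tautI)
  moreover have "A1 \<in> MS4_plus {A1}" by (rule MS4_plus.extra) simp
  moreover have "taut (Imp (Imp (Box ?X) (Box (Neg (Neg ?X)))) (Imp A1 A2))"
    by (auto simp: taut_def A1_def A2_def Neg_def Dia_def Ex_def)
  ultimately show ?thesis using taut_mp2 by blast
qed

lemma A2_A3: "A2 \<in> MS4_plus {A3}"
proof -
  let ?s = "\<lambda>n. if n = 0 then Neg p else Var n"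
  have a3: "subst ?s A3 \<in> MS4_plus {A3}" by (rule in_extra_sub)
  have "Imp (Box (Neg (Neg p))) (Box p) \<in> MS4_plus {A3}"
    by (rule box_mono) (rule MS4_plus.taut, rule tautI)
  then have "Imp (Neg (Box p)) (Neg (Box (Neg (Neg p)))) \<in> MS4_plus {A3}"
    by (rule taut_mp1[rotated]) (auto simp: taut_def Neg_def)
  then have "Imp (Box (All (Neg (Box p)))) (Box (All (Neg (Box (Neg (Neg p)))))) \<in> MS4_plus {A3}"
    by (intro box_mono all_mono)
  moreover have "taut (Imp (subst ?s A3) (Imp (Imp (Box (All (Neg (Box p)))) (Box (All (Neg (Box (Neg (Neg p))))))) A2))"
    by (auto simp: taut_def A3_def A2_def Neg_def Dia_def Ex_def)
  ultimately show ?thesis using taut_mp2 a3 by blast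
qed

lemma A3_A2: "A3 \<in> MS4_plus {A2}"
proof -
  let ?s = "\<lambda>n. if n = 0 then Neg p else Var n"
  have a2: "subst ?s A2 \<in> MS4_plus {A2}" by (rule in_extra_sub)
  have "Imp (All (Neg (Neg p))) (All p) \<in> MS4_plus {A2}"
    by (rule all_mono) (rule MS4_plus.taut, rule tautI)
  then have "Imp (Neg (All p)) (Neg (All (Neg (Neg p)))) \<in> MS4_plus {A2}"
    by (rule taut_mp1[rotated]) (auto simp: taut_def Neg_def)
  then have "Imp (Box (Neg (All p))) (Box (Neg (All (Neg (Neg p))))) \<in> MS4_plus {A2}"
    by (intro box_mono)
  moreover have "taut (Imp (subst ?s A2) (Imp (Imp (Box (Neg (All p))) (Box (Neg (All (Neg (Neg p)))))) A3))"
    by (auto simp: taut_def A3_def A2_def Neg_def Dia_def Ex_def)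
  ultimately show ?thesis using taut_mp2 a2 by blast
qed

lemma eq_plus: "a \<in> MS4_plus {b} \<Longrightarrow> b \<in> MS4_plus {a} \<Longrightarrow> MS4_plus {a} = MS4_plus {b}"
  by (intro equalityI mono_plus) auto

theorem lemma5p9:
  shows "N = MS4_plus {Imp (Box (Ex p)) (Neg (Box (All (Neg (Box p)))))}
       \<and> MS4_plus {Imp (Box (Ex p)) (Neg (Box (All (Neg (Box p)))))}
           = MS4_plus {Imp (Box (All (Dia p))) (Dia (All p))}"
  using eq_plus[OF A1_A2 A2_A1] eq_plus[OF A2_A3 A3_A2]
  unfolding N_def A1_def A2_def A3_def by simp

end
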